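(* Let $G$ be a $(3,4)$-biregular $X,Y$-bigraph in which every vertex of $X$ has degree 3 and every vertex of $Y$ has degree 4. If $G$ has a proper path-factor, then $G$ has an interval coloring using 6 colors (i.e., an interval coloring with colors from $\{1,\dots,6\}$).
   Context: Graphs may have multiple edges. An $X,Y$-bigraph is a bipartite graph with partite sets $X$ and $Y$. A $(3,4)$-biregular bigraph is a bipartite graph in which every vertex of one part has degree 3 and every vertex of the other part has degree 4. A proper path-factor of such a graph $G$ (with $X$ the degree-3 side) is a spanning subgraph of $G$ each of whose components is a path with both endpoints in $X$ and length (number of edges) in $\{2,4,6,8\}$. An interval coloring of a graph is a proper edge-coloring by positive integers such that at every vertex the set of colors on its incident edges is a set of consecutive integers; an interval 6-coloring uses the colors $1,\dots,6$. *)

theory Defs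
  imports Main
begin

text \<open>A bipartite multigraph (X,Y-bigraph): a finite set E of edge identifiers; every
edge e joins the vertex xe e in X to the vertex ye e in Y. Parallel edges are allowed.\<close>

definition bigraph :: "'v set \<Rightarrow> 'v set \<Rightarrow> 'e set \<Rightarrow> ('e \<Rightarrow> 'v) \<Rightarrow> ('e \<Rightarrow> 'v) \<Rightarrow> bool" where
  "bigraph X Y E xe ye \<longleftrightarrow> finite X \<and> finite Y \<and> finite E \<and> X \<inter> Y = {} \<and>
     (\<forall>e\<in>E. xe e \<in> X \<and> ye e \<in> Y)"

definition inc_edges :: "'e set \<Rightarrow> ('e \<Rightarrow> 'v) \<Rightarrow> ('e \<Rightarrow> 'v) \<Rightarrow> 'v \<Rightarrow> 'e set" where
  "inc_edges E xe ye v = {e\<in>E. xe e = v \<or> ye e = v}"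

definition biregular34 :: "'v set \<Rightarrow> 'v set \<Rightarrow> 'e set \<Rightarrow> ('e \<Rightarrow> 'v) \<Rightarrow> ('e \<Rightarrow> 'v) \<Rightarrow> bool" where
  "biregular34 X Y E xe ye \<longleftrightarrow> bigraph X Y E xe ye \<and>
     (\<forall>x\<in>X. card (inc_edges E xe ye x) = 3) \<and> (\<forall>y\<in>Y. card (inc_edges E xe ye y) = 4)"

definition is_path :: "'e set \<Rightarrow> ('e \<Rightarrow> 'v) \<Rightarrow> ('e \<Rightarrow> 'v) \<Rightarrow> 'v list \<Rightarrow> 'e list \<Rightarrow> bool" where
  "is_path E xe ye vs es \<longleftrightarrow> length vs = Suc (length es) \<and> distinct vs \<and>
     (\<forall>i<length es. es ! i \<in> E \<and> {xe (es ! i), ye (es ! i)} = {vs ! i, vs ! Suc i})"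

text \<open>Proper path-factor: a family of vertex-disjoint paths covering all vertices (their
union is the spanning subgraph; its components are exactly these paths), each with both
endpoints in X and length in {2,4,6,8}.\<close>
definition proper_path_factor :: "'v set \<Rightarrow> 'v set \<Rightarrow> 'e set \<Rightarrow> ('e \<Rightarrow> 'v) \<Rightarrow> ('e \<Rightarrow> 'v) \<Rightarrow> bool" where
  "proper_path_factor X Y E xe ye \<longleftrightarrow>
     (\<exists>P :: ('v list \<times> 'e list) set.
        (\<forall>(vs, es)\<in>P. is_path E xe ye vs es \<and> hd vs \<in> X \<and> last vs \<in> X \<and>
                        length es \<in> {2, 4, 6, 8}) \<and>
        (\<forall>p\<in>P. \<forall>q\<in>P. p \<noteq> q \<longrightarrow> set (fst p) \<inter> set (fst q) = {}) \<and>
        (\<Union>p\<in>P. set (fst p)) = X \<union> Y)"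

definition interval_coloring :: "'v set \<Rightarrow> 'e set \<Rightarrow> ('e \<Rightarrow> 'v) \<Rightarrow> ('e \<Rightarrow> 'v) \<Rightarrow> ('e \<Rightarrow> nat) \<Rightarrow> bool" where
  "interval_coloring V E xe ye c \<longleftrightarrow> (\<forall>e\<in>E. c e \<ge> 1) \<and>
     (\<forall>v\<in>V. inj_on c (inc_edges E xe ye v) \<and>
            (\<exists>a b. c ` inc_edges E xe ye v = {a..b}))"

end

theory Submission
  imports Defs
begin


definition free3 :: "'e set \<Rightarrow> ('e \<Rightarrow> 'w) \<Rightarrow> bool" where
  "free3 F f \<longleftrightarrow> (\<forall>a\<in>F. \<forall>b\<in>F. \<forall>d\<in>F. f a = f b \<and> f b = f d \<longrightarrow> a = b \<or> b = d \<or> a = d)"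

definition proper2 :: "'e set \<Rightarrow> ('e \<Rightarrow> 'w) \<Rightarrow> ('e \<Rightarrow> 'w) \<Rightarrow> ('e \<Rightarrow> bool) \<Rightarrow> bool" where
  "proper2 F fa fb c \<longleftrightarrow> (\<forall>e\<in>F. \<forall>e'\<in>F. e \<noteq> e' \<and> (fa e = fa e' \<or> fb e = fb e') \<longrightarrow> c e \<noteq> c e')"

lemma proper2_sym: "proper2 F fa fb c = proper2 F fb fa c"
  unfolding proper2_def by blast

lemma one_end:
  assumes IH: "\<And>F'. card F' < card F \<Longrightarrow> finite F' \<Longrightarrow> free3 F' fa \<Longrightarrow> free3 F' fb \<Longrightarrow> \<exists>c. proper2 F' fa fb c"
  and fin: "finite F" and fa: "free3 F fa" and fb: "free3 F fb"
  and e: "e \<in> F" and none: "\<forall>f\<in>F. f \<noteq> e \<longrightarrow> fa f \<noteq> fa e"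
  shows "\<exists>c. proper2 F fa fb c"
proof -
  have "card (F - {e}) < card F" using fin e by (intro psubset_card_mono) auto
  moreover have "free3 (F - {e}) fa" "free3 (F - {e}) fb" using fa fb unfolding free3_def by blast+
  ultimately obtain c' where c': "proper2 (F - {e}) fa fb c'" using IH fin by blast
  show ?thesis
  proof (cases "\<exists>g\<in>F. g \<noteq> e \<and> fb g = fb e")
    case True
    then obtain g where g: "g \<in> F" "g \<noteq> e" "fb g = fb e" by blast
    define c where "c = c'(e := \<not> c' g)"
    have "proper2 F fa fb c"
      unfolding proper2_def
    proof (intro ballI impI)
      fix x y assume xy: "x \<in> F" "y \<in> F" "x \<noteq> y \<and> (fa x = fa y \<or> fb x = fb y)"
      show "c x \<noteq> c y"
      proof (cases "x = e \<or> y = e")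
        case False
        then show ?thesis using c' xy unfolding proper2_def c_def by auto
      next
        case True
        then show ?thesis
        proof
          assume "x = e"
          then have "y = g" using xy none g fb unfolding free3_def by metis
          then show ?thesis using \<open>x = e\<close> g unfolding c_def by auto
        next
          assume "y = e"
          then have "x = g" using xy none g fb unfolding free3_def by metis
          then show ?thesis using \<open>y = e\<close> g unfolding c_def by auto
        qed
      qed
    qed
    then show ?thesis by blast
  next
    case False
    have "proper2 F fa fb c'"
      unfolding proper2_def
    proof (intro ballI impI)
      fix x y assume xy: "x \<in> F" "y \<in> F" "x \<noteq> y \<and> (fa x = fa y \<or> fb x = fb y)"
      show "c' x \<noteq> c' y"
      proof (cases "x = e \<or> y = e")
        case False
        then show ?thesis using c' xy unfolding proper2_def by auto
      next
        case True
        then show ?thesis using xy none False by metis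
      qed
    qed
    then show ?thesis by blast
  qed
qed

lemma two_col:
  assumes "finite F" "free3 F fa" "free3 F fb"
  shows "\<exists>c. proper2 F fa fb c"
  using assms
proof (induction "card F" arbitrary: F fa fb rule: less_induct)
  case less
  show ?case
  proof (cases "F = {}")
    case True then show ?thesis unfolding proper2_def by auto
  next
    case False
    then obtain e where e: "e \<in> F" by blast
    show ?thesis
    proof (cases "\<forall>f\<in>F. f \<noteq> e \<longrightarrow> fa f \<noteq> fa e")
      case True
      show ?thesis by (rule one_end[OF _ less(2-4) e True]) (use less(1) in blast)
    next
      case Fa: False
      show ?thesis
      proof (cases "\<forall>f\<in>F. f \<noteq> e \<longrightarrow> fb f \<noteq> fb e")
        case True
        have "\<exists>c. proper2 F fb fa c"
          by (rule one_end[OF _ less(2) less(4) less(3) e True]) (use less(1) proper2_sym in blast)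
        then show ?thesis using proper2_sym by blast
      next
        case Fb: False
        from Fa obtain f where f: "f \<in> F" "f \<noteq> e" "fa f = fa e" by blast
        from Fb obtain g where g: "g \<in> F" "g \<noteq> e" "fb g = fb e" by blast
        have fa_uniq: "\<And>h. h \<in> F \<Longrightarrow> fa h = fa e \<Longrightarrow> h = e \<or> h = f"
          using less(3) f e unfolding free3_def by metis
        have fb_uniq: "\<And>h. h \<in> F \<Longrightarrow> fb h = fb e \<Longrightarrow> h = e \<or> h = g"
          using less(4) g e unfolding free3_def by metis
        show ?thesis
        proof (cases "f = g")
          case True
          have "card (F - {e, f}) < card F" using less(2) e f
            by (intro psubset_card_mono) auto
          moreover have "free3 (F - {e,f}) fa" "free3 (F - {e,f}) fb"
            using less(3,4) unfolding free3_def by blast+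
          ultimately obtain c' where c': "proper2 (F - {e,f}) fa fb c'" using less by blast
          define c where "c = c'(e := True, f := False)"
          have "proper2 F fa fb c"
            unfolding proper2_def
          proof (intro ballI impI)
            fix x y assume xy: "x \<in> F" "y \<in> F" "x \<noteq> y \<and> (fa x = fa y \<or> fb x = fb y)"
            show "c x \<noteq> c y"
            proof (cases "x \<in> {e,f} \<or> y \<in> {e,f}")
              case False
              then show ?thesis using c' xy unfolding proper2_def c_def by auto
            next
              case True
              then show ?thesis using xy fa_uniq fb_uniq f g \<open>f = g\<close> unfolding c_def
                by (smt (verit) fun_upd_apply insert_iff singletonD)
            qed
          qed
          then show ?thesis by blast
        next
          case fg: False
          define F' where "F' = F - {e, f}"
          define fb' where "fb' = fb(g := fb f)"
          have gF': "g \<in> F'" using g fg unfolding F'_def by auto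
          have "card F' < card F" using less(2) e f unfolding F'_def
            by (intro psubset_card_mono) auto
          moreover have "free3 F' fa" using less(3) unfolding free3_def F'_def by blast
          moreover have "free3 F' fb'"
            unfolding free3_def
          proof (intro ballI impI)
            fix a b d assume abd: "a \<in> F'" "b \<in> F'" "d \<in> F'" "fb' a = fb' b \<and> fb' b = fb' d"
            have ff: "\<And>h h'. h \<in> F' \<Longrightarrow> h' \<in> F' \<Longrightarrow> h \<noteq> h' \<Longrightarrow> fb h = fb f \<Longrightarrow> fb h' = fb f \<Longrightarrow> False"
            proof -
              fix h h' assume hh: "h \<in> F'" "h' \<in> F'" "h \<noteq> h'" "fb h = fb f" "fb h' = fb f"
              have "h \<noteq> f" "h' \<noteq> f" "h \<in> F" "h' \<in> F" using hh unfolding F'_def by auto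
              then show False using less(4) f hh unfolding free3_def by metis
            qed
            show "a = b \<or> b = d \<or> a = d"
            proof (cases "a = g \<or> b = g \<or> d = g")
              case False
              then have "fb a = fb b \<and> fb b = fb d" using abd unfolding fb'_def by simp
              moreover have "a \<in> F" "b \<in> F" "d \<in> F" using abd unfolding F'_def by auto
              ultimately show ?thesis using less(4) unfolding free3_def by blast
            next
              case True
              then show ?thesis using abd ff unfolding fb'_def
                by (metis fun_upd_apply)
            qed
          qed
          moreover have "finite F'" using less(2) unfolding F'_def by simp
          ultimately obtain c' where c': "proper2 F' fa fb' c'" using less(1) by blast
          define c where "c = c'(e := \<not> c' g, f := c' g)"
          have "proper2 F fa fb c"
            unfolding proper2_def
          proof (intro ballI impI)
            fix x y assume xy: "x \<in> F" "y \<in> F" "x \<noteq> y \<and> (fa x = fa y \<or> fb x = fb y)"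
            have gv: "\<And>h. h \<in> F' \<Longrightarrow> h \<noteq> g \<Longrightarrow> fb h \<noteq> fb g"
              using fb_uniq g unfolding F'_def by auto
            have fv: "fb f \<noteq> fb g" using fb_uniq[of f] f fg g by auto
            have cg: "c g = c' g" using g fg unfolding c_def by auto
            show "c x \<noteq> c y"
            proof (cases "x \<in> {e,f} \<or> y \<in> {e,f}")
              case False
              then have "x \<in> F'" "y \<in> F'" using xy unfolding F'_def by auto
              moreover have "fa x = fa y \<or> fb' x = fb' y"
                using xy gv False \<open>x \<in> F'\<close> \<open>y \<in> F'\<close> unfolding fb'_def
                by (metis fun_upd_apply)
              ultimately have "c' x \<noteq> c' y" using c' xy unfolding proper2_def by blast
              then show ?thesis using False unfolding c_def by auto
            next
              case True
              have key: "\<And>h. h \<in> F \<Longrightarrow> h \<noteq> f \<Longrightarrow> h \<noteq> e \<Longrightarrow> fb h = fb f \<Longrightarrow> c h \<noteq> c f"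
              proof -
                fix h assume h: "h \<in> F" "h \<noteq> f" "h \<noteq> e" "fb h = fb f"
                have "h \<noteq> g" using h fv by auto
                then have "h \<in> F'" using h unfolding F'_def by auto
                moreover have "fb' h = fb' g" using h \<open>h \<noteq> g\<close> unfolding fb'_def by simp
                ultimately have "c' h \<noteq> c' g" using c' gF' \<open>h \<noteq> g\<close> unfolding proper2_def by blast
                then show "c h \<noteq> c f" using h unfolding c_def by simp
              qed
              have ke: "\<And>h. h \<in> F \<Longrightarrow> h \<noteq> e \<Longrightarrow> (fa h = fa e \<or> fb h = fb e) \<Longrightarrow> c h \<noteq> c e"
              proof -
                fix h assume h: "h \<in> F" "h \<noteq> e" "fa h = fa e \<or> fb h = fb e"
                then have "h = f \<or> h = g" using fa_uniq fb_uniq by blast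
                moreover have "c e = (\<not> c' g)" "c f = c' g" using f unfolding c_def by auto
                ultimately show "c h \<noteq> c e" using cg by auto
              qed
              have kf: "\<And>h. h \<in> F \<Longrightarrow> h \<noteq> e \<Longrightarrow> h \<noteq> f \<Longrightarrow> (fa h = fa f \<or> fb h = fb f) \<Longrightarrow> c h \<noteq> c f"
                using fa_uniq f key by metis
              show ?thesis using True xy ke kf by (metis insert_iff singletonD)
            qed
          qed
          then show ?thesis by blast
        qed
      qed
    qed
  qed
qed



definition tt :: "nat \<Rightarrow> nat \<Rightarrow> nat \<Rightarrow> nat \<Rightarrow> nat" where
  "tt a b d j = (if j = 2 then a else if j = 4 then b else d)"

definition pc :: "nat \<Rightarrow> nat \<Rightarrow> nat \<Rightarrow> nat \<Rightarrow> nat \<Rightarrow> nat" where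
  "pc L a b d i = (let B = (4 \<le> L \<and> a = 4) in
     if i = 0 then (if B then 5 else 2)
     else if i = L - 1 then (if B then 2 else 5)
     else if odd i then (if B then (if tt a b d (i+1) = 3 then 2 else 6) else (if tt a b d (i+1) = 3 then 1 else 5))
     else (if B then (if tt a b d i = 3 then 1 else 5) else (if tt a b d i = 3 then 2 else 6)))"

lemma Lcases: "L \<in> {2,4,6,8::nat} \<Longrightarrow> j < L \<Longrightarrow> j \<in> {0,1,2,3,4,5,6,7}" by auto

lemma pc_end0: "L \<in> {2,4,6,8} \<Longrightarrow> pc L a b d 0 \<in> {2,5}"
  unfolding pc_def by (auto simp: Let_def)

lemma pc_endL: "L \<in> {2,4,6,8} \<Longrightarrow> pc L a b d (L - 1) \<in> {2,5}"
  unfolding pc_def by (auto simp: Let_def)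

lemma pc_Y:
  assumes "L \<in> {2,4,6,8}" "a \<in> {3,4}" "b \<in> {3,4}" "d \<in> {3,4}" "L = 8 \<longrightarrow> a \<noteq> d"
    "odd j" "j < L"
  shows "(pc L a b d (j-1), pc L a b d j) \<in> {(1,2),(2,1),(2,5),(5,2),(5,6),(6,5)}"
proof -
  have "j \<in> {1,3,5,7}" using assms(1,6,7) by (auto elim: oddE)
  then show ?thesis using assms
    apply (simp only: insert_iff empty_iff simp_thms)
    apply (elim disjE conjE)
    apply (simp_all add: pc_def tt_def Let_def)
    done
qed

lemma pc_X:
  assumes "L \<in> {2,4,6,8}" "a \<in> {3,4}" "b \<in> {3,4}" "d \<in> {3,4}" "L = 8 \<longrightarrow> a \<noteq> d"
    "even j" "0 < j" "j < L"
  shows "(pc L a b d (j-1), pc L a b d j) \<in> (if tt a b d j = 3 then {(1,2),(2,1)} else {(5,6),(6,5)})"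
proof -
  have "j \<in> {2,4,6}" using assms(1,6,7,8) by (auto elim: evenE)
  then show ?thesis using assms
    apply (simp only: insert_iff empty_iff simp_thms)
    apply (elim disjE conjE)
    apply (simp_all add: pc_def tt_def Let_def)
    done
qed

lemma pc_range: "pc L a b d i \<in> {1,2,5,6}"
  unfolding pc_def Let_def by auto



lemma three_in_card2: "finite S \<Longrightarrow> card S \<le> 2 \<Longrightarrow> a \<in> S \<Longrightarrow> b \<in> S \<Longrightarrow> c \<in> S \<Longrightarrow> a = b \<or> b = c \<or> a = c"
proof (rule ccontr)
  assume "finite S" "card S \<le> 2" "a \<in> S" "b \<in> S" "c \<in> S" "\<not> (a = b \<or> b = c \<or> a = c)"
  then have "card {a,b,c} \<le> card S" by (intro card_mono) auto
  moreover have "card {a,b,c} = 3" using \<open>\<not> (a = b \<or> b = c \<or> a = c)\<close> by auto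
  ultimately show False using \<open>card S \<le> 2\<close> by simp
qed

locale pf =
  fixes X Y :: "'v set" and E :: "'e set" and xe ye :: "'e \<Rightarrow> 'v" and P :: "('v list \<times> 'e list) set"
  assumes big: "bigraph X Y E xe ye"
  and degX: "\<forall>x\<in>X. card (inc_edges E xe ye x) = 3"
  and degY: "\<forall>y\<in>Y. card (inc_edges E xe ye y) = 4"
  and paths: "\<forall>(vs,es)\<in>P. is_path E xe ye vs es \<and> hd vs \<in> X \<and> last vs \<in> X \<and> length es \<in> {2,4,6,8}"
  and disj: "\<forall>p\<in>P. \<forall>q\<in>P. p \<noteq> q \<longrightarrow> set (fst p) \<inter> set (fst q) = {}"
  and cover: "(\<Union>p\<in>P. set (fst p)) = X \<union> Y"
begin

lemma finE: "finite E" and XY: "X \<inter> Y = {}" and xeX: "e \<in> E \<Longrightarrow> xe e \<in> X" and yeY: "e \<in> E \<Longrightarrow> ye e \<in> Y"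
  using big unfolding bigraph_def by auto

lemma pathD:
  assumes "(vs, es) \<in> P"
  shows "length vs = Suc (length es)" "distinct vs" "hd vs \<in> X" "last vs \<in> X" "length es \<in> {2,4,6,8}"
    "\<And>i. i < length es \<Longrightarrow> es ! i \<in> E \<and> {xe (es ! i), ye (es ! i)} = {vs ! i, vs ! Suc i}"
proof -
  have h: "is_path E xe ye vs es \<and> hd vs \<in> X \<and> last vs \<in> X \<and> length es \<in> {2,4,6,8}"
    using assms paths by blast
  then show "length vs = Suc (length es)" "distinct vs" "hd vs \<in> X" "last vs \<in> X" "length es \<in> {2,4,6,8}"
    unfolding is_path_def by blast+
  show "\<And>i. i < length es \<Longrightarrow> es ! i \<in> E \<and> {xe (es ! i), ye (es ! i)} = {vs ! i, vs ! Suc i}"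
    using h unfolding is_path_def by blast
qed

lemma parity:
  assumes "(vs, es) \<in> P" "j \<le> length es"
  shows "(vs ! j \<in> X \<longleftrightarrow> even j) \<and> (vs ! j \<in> Y \<longleftrightarrow> odd j)"
  using assms(2)
proof (induction j)
  case 0
  have "vs ! 0 = hd vs" using pathD(1)[OF assms(1)] by (cases vs) auto
  then show ?case using pathD(3)[OF assms(1)] XY by auto
next
  case (Suc j)
  have e: "es ! j \<in> E \<and> {xe (es ! j), ye (es ! j)} = {vs ! j, vs ! Suc j}"
    using pathD(6)[OF assms(1)] Suc(2) by simp
  have "(vs ! j \<in> X \<and> vs ! Suc j \<in> Y) \<or> (vs ! j \<in> Y \<and> vs ! Suc j \<in> X)"
    using e xeX yeY by (metis doubleton_eq_iff)
  then show ?case using Suc XY by auto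
qed

lemma vert_unique:
  assumes "(vs, es) \<in> P" "(vs', es') \<in> P" "j < length vs" "k < length vs'" "vs ! j = vs' ! k"
  shows "vs = vs' \<and> es = es' \<and> j = k"
proof -
  have "vs ! j \<in> set vs" "vs' ! k \<in> set vs'" using assms(3,4) by auto
  then have "vs ! j \<in> set (fst (vs,es)) \<inter> set (fst (vs',es'))" using assms(5) by simp
  then have "(vs, es) = (vs', es')" using disj assms(1,2) by blast
  then show ?thesis using pathD(2)[OF assms(1)] assms nth_eq_iff_index_eq by fastforce
qed

lemma vert_exists:
  assumes "v \<in> X \<union> Y"
  obtains vs es j where "(vs, es) \<in> P" "j \<le> length es" "vs ! j = v"
proof -
  obtain p where "p \<in> P" "v \<in> set (fst p)" using assms cover by blast
  then obtain vs es where "(vs,es) \<in> P" "v \<in> set vs" by (cases p) auto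
  then obtain j where "j < length vs" "vs ! j = v" by (auto simp: in_set_conv_nth)
  moreover have "j \<le> length es" using \<open>j < length vs\<close> pathD(1)[OF \<open>(vs,es) \<in> P\<close>] by simp
  ultimately show ?thesis using that \<open>(vs,es) \<in> P\<close> by blast
qed

lemma edge_unique:
  assumes "(vs, es) \<in> P" "(vs', es') \<in> P" "i < length es" "i' < length es'" "es ! i = es' ! i'"
  shows "vs = vs' \<and> es = es' \<and> i = i'"
proof -
  have l: "length vs = Suc (length es)" "length vs' = Suc (length es')" using pathD(1) assms by auto
  have e1: "{xe (es ! i), ye (es ! i)} = {vs ! i, vs ! Suc i}" using pathD(6)[OF assms(1,3)] by simp
  have e2: "{xe (es ! i), ye (es ! i)} = {vs' ! i', vs' ! Suc i'}" using pathD(6)[OF assms(2,4)] assms(5) by simp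
  have "vs ! i \<in> {vs' ! i', vs' ! Suc i'}" using e1 e2 by auto
  then have same: "vs = vs' \<and> es = es'"
  proof
    assume "vs ! i = vs' ! i'" then show ?thesis using vert_unique[OF assms(1,2), of i i'] l assms(3,4) by simp
  next
    assume "vs ! i \<in> {vs' ! Suc i'}" then show ?thesis using vert_unique[OF assms(1,2), of i "Suc i'"] l assms(3,4) by simp
  qed
  have d: "distinct vs" using pathD(2)[OF assms(1)] .
  have "{vs ! i, vs ! Suc i} = {vs ! i', vs ! Suc i'}" using e1 e2 same by simp
  then have "(vs ! i = vs ! i' \<and> vs ! Suc i = vs ! Suc i') \<or> (vs ! i = vs ! Suc i' \<and> vs ! Suc i = vs ! i')"
    by (metis doubleton_eq_iff)
  then have "(i = i' \<and> Suc i = Suc i') \<or> (i = Suc i' \<and> Suc i = i')"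
  proof -
    have b: "i < length vs" "Suc i < length vs" "i' < length vs" "Suc i' < length vs" using l assms(3,4) same by auto
    show ?thesis using \<open>_ \<or> _\<close> nth_eq_iff_index_eq[OF d b(1) b(3)] nth_eq_iff_index_eq[OF d b(2) b(4)]
       nth_eq_iff_index_eq[OF d b(1) b(4)] nth_eq_iff_index_eq[OF d b(2) b(3)] by blast
  qed
  then show ?thesis using same by auto
qed

definition PE :: "'e set" where
  "PE = {e. \<exists>vs es i. (vs, es) \<in> P \<and> i < length es \<and> es ! i = e}"

definition H :: "'e set" where "H = E - PE"

lemma Pinc:
  assumes "(vs, es) \<in> P" "j \<le> length es"
  shows "inc_edges E xe ye (vs ! j) \<inter> PE = {es ! i | i. i < length es \<and> (i = j \<or> Suc i = j)}"
proof
  show "inc_edges E xe ye (vs ! j) \<inter> PE \<subseteq> {es ! i | i. i < length es \<and> (i = j \<or> Suc i = j)}"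
  proof
    fix e assume e: "e \<in> inc_edges E xe ye (vs ! j) \<inter> PE"
    then have "e \<in> PE" by blast
    then obtain vs' es' i where p': "(vs', es') \<in> P" "i < length es'" "es' ! i = e" unfolding PE_def by blast
    have ee: "{xe e, ye e} = {vs' ! i, vs' ! Suc i}" using pathD(6)[OF p'(1,2)] p'(3) by simp
    have "xe e = vs ! j \<or> ye e = vs ! j" using e unfolding inc_edges_def by blast
    then have "vs ! j \<in> {xe e, ye e}" by auto
    then have vj: "vs ! j = vs' ! i \<or> vs ! j = vs' ! Suc i" using ee by blast
    have l: "length vs = Suc (length es)" "length vs' = Suc (length es')" using pathD(1) assms(1) p'(1) by blast+
    have jl: "j < length vs" "i < length vs'" "Suc i < length vs'" using l assms(2) p'(2) by simp_all
    have "vs = vs' \<and> es = es' \<and> (j = i \<or> j = Suc i)"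
      using vj vert_unique[OF assms(1) p'(1) jl(1) jl(2)] vert_unique[OF assms(1) p'(1) jl(1) jl(3)] by blast
    then show "e \<in> {es ! i | i. i < length es \<and> (i = j \<or> Suc i = j)}" using p' by auto
  qed
next
  show "{es ! i | i. i < length es \<and> (i = j \<or> Suc i = j)} \<subseteq> inc_edges E xe ye (vs ! j) \<inter> PE"
  proof
    fix e assume "e \<in> {es ! i | i. i < length es \<and> (i = j \<or> Suc i = j)}"
    then obtain i where i: "i < length es" "i = j \<or> Suc i = j" "e = es ! i" by auto
    have "es ! i \<in> E \<and> {xe (es ! i), ye (es ! i)} = {vs ! i, vs ! Suc i}" using pathD(6)[OF assms(1) i(1)] .
    then have "e \<in> E" "xe e = vs ! j \<or> ye e = vs ! j" using i(2,3) by (metis insertCI doubleton_eq_iff)+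
    moreover have "e \<in> PE" unfolding PE_def using i assms(1) by blast
    ultimately show "e \<in> inc_edges E xe ye (vs ! j) \<inter> PE" unfolding inc_edges_def by auto
  qed
qed

lemma Pinc0:
  assumes a: "(vs, es) \<in> P"
  shows "inc_edges E xe ye (vs ! 0) \<inter> PE = {es ! 0}"
proof -
  have "length es \<ge> 2" using pathD(5)[OF a] by auto
  then have "{es ! i | i. i < length es \<and> (i = 0 \<or> Suc i = 0)} = {es ! 0}" by auto
  then show ?thesis using Pinc[OF a, of 0] by simp
qed

lemma PincL:
  assumes a: "(vs, es) \<in> P"
  shows "inc_edges E xe ye (vs ! length es) \<inter> PE = {es ! (length es - 1)}"
proof -
  have "length es \<ge> 2" using pathD(5)[OF a] by auto
  then have "{es ! i | i. i < length es \<and> (i = length es \<or> Suc i = length es)} = {es ! (length es - 1)}"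
    by (cases "length es") auto
  then show ?thesis using Pinc[OF a, of "length es"] by simp
qed

lemma PincM:
  assumes "(vs, es) \<in> P" "0 < j" "j < length es"
  shows "inc_edges E xe ye (vs ! j) \<inter> PE = {es ! (j - 1), es ! j}" "es ! (j - 1) \<noteq> es ! j"
proof -
  have "{es ! i | i. i < length es \<and> (i = j \<or> Suc i = j)} = {es ! (j - 1), es ! j}"
  proof
    show "{es ! i | i. i < length es \<and> (i = j \<or> Suc i = j)} \<subseteq> {es ! (j - 1), es ! j}" by auto
    show "{es ! (j - 1), es ! j} \<subseteq> {es ! i | i. i < length es \<and> (i = j \<or> Suc i = j)}"
    proof -
      have "es ! (j - 1) \<in> {es ! i | i. i < length es \<and> (i = j \<or> Suc i = j)}"
        using assms(2,3) by (intro CollectI exI[of _ "j - 1"]) simp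
      moreover have "es ! j \<in> {es ! i | i. i < length es \<and> (i = j \<or> Suc i = j)}"
        using assms(2,3) by blast
      ultimately show ?thesis by blast
    qed
  qed
  then show "inc_edges E xe ye (vs ! j) \<inter> PE = {es ! (j - 1), es ! j}" using Pinc[OF assms(1)] assms(3) by simp
  show "es ! (j - 1) \<noteq> es ! j"
  proof
    assume "es ! (j - 1) = es ! j"
    then have "j - 1 = j" using edge_unique[OF assms(1) assms(1), of "j-1" j] assms(3) by simp
    then show False using assms(2) by simp
  qed
qed

lemma finite_inc: "finite (inc_edges E xe ye v)"
  using finE unfolding inc_edges_def by auto

lemma card_H:
  assumes "(vs, es) \<in> P" "j \<le> length es"
  shows "card (inc_edges E xe ye (vs ! j) - PE) =
     card (inc_edges E xe ye (vs ! j)) - card (inc_edges E xe ye (vs ! j) \<inter> PE)"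
  by (rule card_Diff_subset_Int) (simp add: finite_inc)

end


context pf begin

definition Hinc :: "'v \<Rightarrow> 'e set" where "Hinc v = inc_edges E xe ye v - PE"

lemma card_Hinc:
  assumes a: "(vs, es) \<in> P" and j: "j \<le> length es"
  shows "card (Hinc (vs ! j)) = (if 0 < j \<and> j < length es \<and> even j then 1 else 2)"
proof -
  have L: "length es \<in> {2,4,6,8}" using pathD(5)[OF a] .
  have ch: "card (Hinc (vs ! j)) = card (inc_edges E xe ye (vs ! j)) - card (inc_edges E xe ye (vs ! j) \<inter> PE)"
    unfolding Hinc_def using card_H[OF a j] .
  have par: "(vs ! j \<in> X \<longleftrightarrow> even j) \<and> (vs ! j \<in> Y \<longleftrightarrow> odd j)" using parity[OF a j] .
  show ?thesis
  proof (cases "j = 0")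
    case True
    then show ?thesis using ch Pinc0[OF a] par degX by simp
  next
    case j0: False
    show ?thesis
    proof (cases "j = length es")
      case True
      have "even j" using True L by auto
      then show ?thesis using ch PincL[OF a] par degX True by simp
    next
      case False
      then have jl: "0 < j" "j < length es" using j0 j by auto
      have c2: "card (inc_edges E xe ye (vs ! j) \<inter> PE) = 2" using PincM[OF a jl] by simp
      show ?thesis
      proof (cases "even j")
        case True then show ?thesis using ch c2 par degX jl by simp
      next
        case False then show ?thesis using ch c2 par degY jl by simp
      qed
    qed
  qed
qed

lemma Hinc_sub: "Hinc v \<subseteq> H"
  unfolding Hinc_def H_def inc_edges_def by auto

lemma Hinc_X: "v \<in> X \<Longrightarrow> Hinc v = {h \<in> H. xe h = v}"
  unfolding Hinc_def H_def inc_edges_def using XY yeY by auto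

lemma Hinc_Y: "v \<in> Y \<Longrightarrow> Hinc v = {h \<in> H. ye h = v}"
  unfolding Hinc_def H_def inc_edges_def using XY xeX by auto

lemma finite_Hinc: "finite (Hinc v)"
  unfolding Hinc_def using finite_inc by auto

lemma card_Hinc_le2: "v \<in> X \<union> Y \<Longrightarrow> card (Hinc v) \<le> 2"
proof -
  assume "v \<in> X \<union> Y"
  then obtain vs es j where "(vs, es) \<in> P" "j \<le> length es" "vs ! j = v" by (rule vert_exists)
  then show ?thesis using card_Hinc by fastforce
qed

lemma H_xe: "h \<in> H \<Longrightarrow> xe h \<in> X \<and> h \<in> Hinc (xe h)"
  using Hinc_X xeX unfolding H_def by auto

lemma H_ye: "h \<in> H \<Longrightarrow> ye h \<in> Y \<and> h \<in> Hinc (ye h)"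
  using Hinc_Y yeY unfolding H_def by auto

definition phi :: "'v \<Rightarrow> 'v" where
  "phi w = (if \<exists>vs es. (vs, es) \<in> P \<and> length es = 8 \<and> vs ! 6 = w
            then (SOME vs. \<exists>es. (vs, es) \<in> P \<and> length es = 8 \<and> vs ! 6 = w) ! 2 else w)"

lemma phi6:
  assumes a: "(vs, es) \<in> P" "length es = 8"
  shows "phi (vs ! 6) = vs ! 2"
proof -
  have ex: "\<exists>vs' es'. (vs', es') \<in> P \<and> length es' = 8 \<and> vs' ! 6 = vs ! 6" using a by blast
  define vs' where "vs' = (SOME vs'. \<exists>es'. (vs', es') \<in> P \<and> length es' = 8 \<and> vs' ! 6 = vs ! 6)"
  have "\<exists>es'. (vs', es') \<in> P \<and> length es' = 8 \<and> vs' ! 6 = vs ! 6"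
    unfolding vs'_def using someI_ex[of "\<lambda>vs'. \<exists>es'. (vs', es') \<in> P \<and> length es' = 8 \<and> vs' ! 6 = vs ! 6"] ex by blast
  then obtain es' where e': "(vs', es') \<in> P" "length es' = 8" "vs' ! 6 = vs ! 6" by blast
  have "length vs = 9" "length vs' = 9" using pathD(1) a e' by auto
  then have "vs' = vs" using vert_unique[OF e'(1) a(1), of 6 6] e'(3) by simp
  then show ?thesis unfolding phi_def using ex vs'_def by simp
qed

lemma phi_cases:
  "phi w = w \<or> (\<exists>vs es. (vs, es) \<in> P \<and> length es = 8 \<and> w = vs ! 6 \<and> phi w = vs ! 2)"
proof (cases "\<exists>vs es. (vs, es) \<in> P \<and> length es = 8 \<and> vs ! 6 = w")
  case True
  then obtain vs es where "(vs, es) \<in> P" "length es = 8" "vs ! 6 = w" by blast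
  then show ?thesis using phi6 by blast
next
  case False then show ?thesis unfolding phi_def by auto
qed

lemma card1_eq: "card S = 1 \<Longrightarrow> a \<in> S \<Longrightarrow> b \<in> S \<Longrightarrow> a = b"
  by (metis card_1_singletonE singletonD)

lemma free3_ye: "free3 H ye"
  unfolding free3_def
proof (intro ballI impI)
  fix a b d assume abd: "a \<in> H" "b \<in> H" "d \<in> H" "ye a = ye b \<and> ye b = ye d"
  have "a \<in> Hinc (ye a)" "b \<in> Hinc (ye b)" "d \<in> Hinc (ye d)" "ye a \<in> Y" using abd H_ye by blast+
  then have "a \<in> Hinc (ye a)" "b \<in> Hinc (ye a)" "d \<in> Hinc (ye a)" "ye a \<in> Y" using abd by simp_all
  moreover have "card (Hinc (ye a)) \<le> 2" using card_Hinc_le2 \<open>ye a \<in> Y\<close> by blast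
  ultimately show "a = b \<or> b = d \<or> a = d" using three_in_card2[OF finite_Hinc, of "ye a"] by blast
qed

lemma free3_phi: "free3 H (\<lambda>h. phi (xe h))"
  unfolding free3_def
proof (intro ballI impI)
  fix a b d assume abd: "a \<in> H" "b \<in> H" "d \<in> H" "phi (xe a) = phi (xe b) \<and> phi (xe b) = phi (xe d)"
  define w where "w = phi (xe a)"
  have hw: "\<And>h. h \<in> {a,b,d} \<Longrightarrow> phi (xe h) = w" using abd w_def by auto
  have hH: "\<And>h. h \<in> {a,b,d} \<Longrightarrow> h \<in> H" using abd by auto
  show "a = b \<or> b = d \<or> a = d"
  proof (cases "\<exists>vs es. (vs, es) \<in> P \<and> length es = 8 \<and> vs ! 2 = w")
    case True
    then obtain vs es where p: "(vs, es) \<in> P" "length es = 8" "vs ! 2 = w" by blast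
    have lv: "length vs = 9" using pathD(1)[OF p(1)] p(2) by simp
    have loc: "\<And>h. h \<in> {a,b,d} \<Longrightarrow> xe h = vs ! 2 \<or> xe h = vs ! 6"
    proof -
      fix h assume h: "h \<in> {a,b,d}"
      have hw1: "phi (xe h) = w" by (rule hw[OF h])
      from phi_cases[of "xe h"] show "xe h = vs ! 2 \<or> xe h = vs ! 6"
      proof
        assume "phi (xe h) = xe h" then have "xe h = vs ! 2" using hw1 p(3) by metis
        then show ?thesis by (rule disjI1)
      next
        assume "\<exists>vs' es'. (vs', es') \<in> P \<and> length es' = 8 \<and> xe h = vs' ! 6 \<and> phi (xe h) = vs' ! 2"
        then obtain vs' es' where q: "(vs', es') \<in> P" "length es' = 8" "xe h = vs' ! 6" "phi (xe h) = vs' ! 2" by blast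
        have l1: "length vs' = Suc (length es')" by (rule pathD(1)[OF q(1)])
        have i1: "2 < length vs'" using l1 q(2) by simp
        have i2: "2 < length vs" using lv by simp
        have eq: "vs' ! 2 = vs ! 2" using q(4) hw1 p(3) by metis
        have "vs' = vs" using vert_unique[OF q(1) p(1) i1 i2 eq] by blast
        then show ?thesis using q(3) by (intro disjI2) simp
      qed
    qed
    have c2a: "card (Hinc (vs ! 2)) = 1" using card_Hinc[OF p(1), of 2] p(2) by simp
    have c2b: "card (Hinc (vs ! 6)) = 1" using card_Hinc[OF p(1), of 6] p(2) by simp
    have inj: "\<And>h h'. h \<in> {a,b,d} \<Longrightarrow> h' \<in> {a,b,d} \<Longrightarrow> xe h = xe h' \<Longrightarrow> h = h'"
    proof -
      fix h h' assume hh: "h \<in> {a,b,d}" "h' \<in> {a,b,d}" "xe h = xe h'"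
      have i1: "h \<in> Hinc (xe h)" using H_xe[OF hH[OF hh(1)]] by (rule conjunct2)
      have "h' \<in> Hinc (xe h')" using H_xe[OF hH[OF hh(2)]] by (rule conjunct2)
      then have i2: "h' \<in> Hinc (xe h)" using hh(3) by simp
      have "card (Hinc (xe h)) = 1"
        using loc[OF hh(1)] c2a c2b by (elim disjE) simp_all
      then show "h = h'" by (rule card1_eq[OF _ i1 i2])
    qed
    have la: "xe a = vs ! 2 \<or> xe a = vs ! 6" by (rule loc) simp
    have lb: "xe b = vs ! 2 \<or> xe b = vs ! 6" by (rule loc) simp
    have ld: "xe d = vs ! 2 \<or> xe d = vs ! 6" by (rule loc) simp
    have "xe a = xe b \<or> xe b = xe d \<or> xe a = xe d"
      using la lb ld by (elim disjE) simp_all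
    then show ?thesis
    proof (elim disjE)
      assume "xe a = xe b" then show ?thesis using inj[of a b] by simp
    next
      assume "xe b = xe d" then show ?thesis using inj[of b d] by simp
    next
      assume "xe a = xe d" then show ?thesis using inj[of a d] by simp
    qed
  next
    case False
    have "\<And>h. h \<in> {a,b,d} \<Longrightarrow> xe h = w"
    proof -
      fix h assume h: "h \<in> {a,b,d}"
      from phi_cases[of "xe h"] show "xe h = w"
      proof
        assume "phi (xe h) = xe h" then show ?thesis using hw[OF h] by simp
      next
        assume "\<exists>vs' es'. (vs', es') \<in> P \<and> length es' = 8 \<and> xe h = vs' ! 6 \<and> phi (xe h) = vs' ! 2"
        then obtain vs' es' where q: "(vs', es') \<in> P" "length es' = 8" "phi (xe h) = vs' ! 2" by blast
        then have "vs' ! 2 = w" using hw[OF h] by simp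
        then show ?thesis using False q by blast
      qed
    qed
    then have x: "xe a = w" "xe b = w" "xe d = w" by simp_all
    have "a \<in> Hinc (xe a)" "b \<in> Hinc (xe b)" "d \<in> Hinc (xe d)" "xe a \<in> X" using abd H_xe by blast+
    then have "a \<in> Hinc w" "b \<in> Hinc w" "d \<in> Hinc w" "w \<in> X" using x by simp_all
    moreover have "card (Hinc w) \<le> 2" using card_Hinc_le2 \<open>w \<in> X\<close> by blast
    ultimately show ?thesis using three_in_card2[OF finite_Hinc, of w] by blast
  qed
qed

lemma finite_H: "finite H" unfolding H_def using finE by simp

end



lemma fin_interval:
  assumes "finite A" "f ` A = {lo..hi}" "card A = Suc hi - lo"
  shows "inj_on f A \<and> (\<exists>a b. f ` A = {a..b})"
proof -
  have "card (f ` A) = card A" using assms(2,3) by simp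
  then have "inj_on f A" by (rule eq_card_imp_inj_on[OF assms(1)])
  then show ?thesis using assms(2) by blast
qed

lemma mk_int:
  assumes "\<And>x. (x \<in> S) = (lo \<le> x \<and> x \<le> hi)" "Suc hi - lo = n"
  shows "\<exists>lo hi. (S::nat set) = {lo..hi} \<and> Suc hi - lo = n"
proof -
  have "S = {lo..hi}" using assms(1) by (simp add: set_eq_iff)
  then show ?thesis using assms(2) by blast
qed

lemma int_end: "(p::nat) \<in> {2,5} \<Longrightarrow> \<exists>lo hi. {p, 3, 4} = {lo..hi} \<and> Suc hi - lo = 3"
proof -
  assume "p \<in> {2,5}"
  then have "p = 2 \<or> p = 5" by simp
  then show ?thesis
  proof (elim disjE)
    assume "p = 2" then show ?thesis by - (rule mk_int[of _ 2 4], (simp; presburger)+)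
  next
    assume "p = 5" then show ?thesis by - (rule mk_int[of _ 3 5], (simp; presburger)+)
  qed
qed

lemma int_Y: "((p::nat), q) \<in> {(1,2),(2,1),(2,5),(5,2),(5,6),(6,5)} \<Longrightarrow> \<exists>lo hi. {p, q, 3, 4} = {lo..hi} \<and> Suc hi - lo = 4"
proof -
  assume a: "(p, q) \<in> {(1,2),(2,1),(2,5),(5,2),(5,6),(6,5)}"
  then have "(p = 1 \<and> q = 2) \<or> (p = 2 \<and> q = 1) \<or> (p = 2 \<and> q = 5) \<or> (p = 5 \<and> q = 2) \<or> (p = 5 \<and> q = 6) \<or> (p = 6 \<and> q = 5)"
    by simp
  then show ?thesis
  proof (elim disjE conjE)
    assume "p = 1" "q = 2" then show ?thesis by - (rule mk_int[of _ 1 4], (simp; presburger)+)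
  next
    assume "p = 2" "q = 1" then show ?thesis by - (rule mk_int[of _ 1 4], (simp; presburger)+)
  next
    assume "p = 2" "q = 5" then show ?thesis by - (rule mk_int[of _ 2 5], (simp; presburger)+)
  next
    assume "p = 5" "q = 2" then show ?thesis by - (rule mk_int[of _ 2 5], (simp; presburger)+)
  next
    assume "p = 5" "q = 6" then show ?thesis by - (rule mk_int[of _ 3 6], (simp; presburger)+)
  next
    assume "p = 6" "q = 5" then show ?thesis by - (rule mk_int[of _ 3 6], (simp; presburger)+)
  qed
qed

lemma int_X: "t \<in> {3,4} \<Longrightarrow> ((p::nat), q) \<in> (if t = 3 then {(1,2),(2,1)} else {(5,6),(6,5)}) \<Longrightarrow>
   \<exists>lo hi. {p, q, t} = {lo..hi} \<and> Suc hi - lo = 3"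
proof -
  assume t: "t \<in> {3,4}" and a: "(p, q) \<in> (if t = 3 then {(1,2),(2,1)} else {(5,6),(6,5)})"
  have "(t = 3 \<and> p = 1 \<and> q = 2) \<or> (t = 3 \<and> p = 2 \<and> q = 1) \<or> (t = 4 \<and> p = 5 \<and> q = 6) \<or> (t = 4 \<and> p = 6 \<and> q = 5)"
    using t a by (cases "t = 3") auto
  then show ?thesis
  proof (elim disjE conjE)
    assume "t = 3" "p = 1" "q = 2" then show ?thesis by - (rule mk_int[of _ 1 3], (simp; presburger)+)
  next
    assume "t = 3" "p = 2" "q = 1" then show ?thesis by - (rule mk_int[of _ 1 3], (simp; presburger)+)
  next
    assume "t = 4" "p = 5" "q = 6" then show ?thesis by - (rule mk_int[of _ 4 6], (simp; presburger)+)
  next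
    assume "t = 4" "p = 6" "q = 5" then show ?thesis by - (rule mk_int[of _ 4 6], (simp; presburger)+)
  qed
qed

locale pf2 = pf X Y E xe ye P for X Y :: "'v set" and E :: "'e set" and xe ye P +
  fixes c2 :: "'e \<Rightarrow> bool"
  assumes c2: "proper2 H (\<lambda>h. phi (xe h)) ye c2"
begin

definition hc :: "'e \<Rightarrow> nat" where "hc h = (if c2 h then 3 else 4)"
definition hcol :: "'v \<Rightarrow> nat" where "hcol v = hc (SOME h. h \<in> Hinc v)"
definition pcolor :: "'v list \<Rightarrow> 'e list \<Rightarrow> nat \<Rightarrow> nat" where
  "pcolor vs es i = pc (length es) (hcol (vs ! 2)) (hcol (vs ! 4)) (hcol (vs ! 6)) i"
definition col :: "'e \<Rightarrow> nat" where
  "col e = (if e \<in> PE then (SOME k. \<exists>vs es i. (vs, es) \<in> P \<and> i < length es \<and> es ! i = e \<and> k = pcolor vs es i) else hc e)"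

lemma col_P:
  assumes p: "(vs, es) \<in> P" "i < length es"
  shows "col (es ! i) = pcolor vs es i"
proof -
  have inPE: "es ! i \<in> PE" unfolding PE_def using p by blast
  define Q where "Q = (\<lambda>k. \<exists>vs' es' i'. (vs', es') \<in> P \<and> i' < length es' \<and> es' ! i' = es ! i \<and> k = pcolor vs' es' i')"
  have "Q (pcolor vs es i)" unfolding Q_def using p by blast
  then have "Q (SOME k. Q k)" by (rule someI)
  then obtain vs' es' i' where q: "(vs', es') \<in> P" "i' < length es'" "es' ! i' = es ! i" "(SOME k. Q k) = pcolor vs' es' i'"
    unfolding Q_def by blast
  have "vs' = vs \<and> es' = es \<and> i' = i" using edge_unique[OF q(1) p(1) q(2) p(2) q(3)] .
  then have "(SOME k. Q k) = pcolor vs es i" using q(4) by simp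
  then show ?thesis unfolding col_def Q_def using inPE by simp
qed

lemma col_H: "h \<in> H \<Longrightarrow> col h = hc h"
  unfolding col_def H_def by simp

lemma hc_diff:
  assumes "h \<in> H" "h' \<in> H" "h \<noteq> h'" "phi (xe h) = phi (xe h') \<or> ye h = ye h'"
  shows "hc h \<noteq> hc h'"
proof -
  have "c2 h \<noteq> c2 h'" using c2 assms unfolding proper2_def by blast
  then show ?thesis unfolding hc_def by (cases "c2 h") auto
qed

lemma hc_pair:
  assumes "h \<in> H" "h' \<in> H" "h \<noteq> h'" "phi (xe h) = phi (xe h') \<or> ye h = ye h'"
  shows "{hc h, hc h'} = {3, 4}"
proof -
  have "c2 h \<noteq> c2 h'" using c2 assms unfolding proper2_def by blast
  then show ?thesis unfolding hc_def by (cases "c2 h") auto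
qed

lemma hcol_in: "hcol v \<in> {3,4}"
  unfolding hcol_def hc_def by auto

lemma hcol_single: "Hinc v = {h} \<Longrightarrow> hcol v = hc h"
  unfolding hcol_def by simp

lemma pcolor_range: "pcolor vs es i \<in> {1,2,5,6}"
  unfolding pcolor_def by (rule pc_range)

lemma single_H:
  assumes "(vs, es) \<in> P" "0 < j" "j < length es" "even j"
  obtains h where "Hinc (vs ! j) = {h}" "h \<in> H" "xe h = vs ! j"
proof -
  have "card (Hinc (vs ! j)) = 1" using card_Hinc[OF assms(1)] assms by simp
  then obtain h where h: "Hinc (vs ! j) = {h}" by (rule card_1_singletonE)
  have X: "vs ! j \<in> X" using parity[OF assms(1)] assms by simp
  have "h \<in> Hinc (vs ! j)" using h by simp
  then have "h \<in> H" "xe h = vs ! j" using Hinc_X[OF X] by auto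
  then show ?thesis using that h by blast
qed

lemma a_ne_d:
  assumes p: "(vs, es) \<in> P" "length es = 8"
  shows "hcol (vs ! 2) \<noteq> hcol (vs ! 6)"
proof -
  obtain h2 where h2: "Hinc (vs ! 2) = {h2}" "h2 \<in> H" "xe h2 = vs ! 2" by (rule single_H[OF p(1), of 2]) (use p(2) in simp_all)
  obtain h6 where h6: "Hinc (vs ! 6) = {h6}" "h6 \<in> H" "xe h6 = vs ! 6" by (rule single_H[OF p(1), of 6]) (use p(2) in simp_all)
  have lv: "length vs = 9" using pathD(1)[OF p(1)] p(2) by simp
  have d: "distinct vs" using pathD(2)[OF p(1)] .
  have ne: "vs ! 2 \<noteq> vs ! 6" using nth_eq_iff_index_eq[OF d, of 2 6] lv by simp
  then have hne: "h2 \<noteq> h6" using h2 h6 by auto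
  have p6: "phi (vs ! 6) = vs ! 2" by (rule phi6[OF p])
  have p2: "phi (vs ! 2) = vs ! 2"
  proof -
    from phi_cases[of "vs ! 2"] show ?thesis
    proof
      assume "\<exists>vs' es'. (vs', es') \<in> P \<and> length es' = 8 \<and> vs ! 2 = vs' ! 6 \<and> phi (vs ! 2) = vs' ! 2"
      then obtain vs' es' where q: "(vs', es') \<in> P" "length es' = 8" "vs ! 2 = vs' ! 6" by blast
      have "length vs' = 9" using pathD(1)[OF q(1)] q(2) by simp
      then have i: "6 < length vs'" by simp
      have "vs = vs' \<and> es = es' \<and> 2 = (6::nat)" by (rule vert_unique[OF p(1) q(1) _ i q(3)]) (simp add: lv)
      then show ?thesis by simp
    qed
  qed
  have "hc h2 \<noteq> hc h6" by (rule hc_diff[OF h2(2) h6(2) hne]) (simp add: h2(3) h6(3) p6 p2)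
  then show ?thesis using hcol_single[OF h2(1)] hcol_single[OF h6(1)] by simp
qed

lemma good_vertex:
  assumes v: "v \<in> X \<union> Y"
  shows "inj_on col (inc_edges E xe ye v) \<and> (\<exists>a b. col ` inc_edges E xe ye v = {a..b})"
proof -
  obtain vs es j where p: "(vs, es) \<in> P" "j \<le> length es" "vs ! j = v" using v by (rule vert_exists)
  define L where "L = length es"
  define ta where "ta = hcol (vs ! 2)"
  define tb where "tb = hcol (vs ! 4)"
  define td where "td = hcol (vs ! 6)"
  have L: "L \<in> {2,4,6,8}" unfolding L_def using pathD(5)[OF p(1)] .
  have t: "ta \<in> {3,4}" "tb \<in> {3,4}" "td \<in> {3,4}" unfolding ta_def tb_def td_def using hcol_in by auto
  have ad: "L = 8 \<longrightarrow> ta \<noteq> td" unfolding L_def ta_def td_def using a_ne_d[OF p(1)] by blast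
  have pcol: "\<And>i. i < L \<Longrightarrow> col (es ! i) = pc L ta tb td i"
    unfolding L_def ta_def tb_def td_def using col_P[OF p(1)] pcolor_def by simp
  have par: "(v \<in> X \<longleftrightarrow> even j) \<and> (v \<in> Y \<longleftrightarrow> odd j)" using parity[OF p(1,2)] p(3) by simp
  have split: "inc_edges E xe ye v = (inc_edges E xe ye v \<inter> PE) \<union> Hinc v" unfolding Hinc_def by blast
  have cH: "card (Hinc v) = (if 0 < j \<and> j < L \<and> even j then 1 else 2)"
    using card_Hinc[OF p(1,2)] p(3) L_def by simp
  have fin: "finite (inc_edges E xe ye v)" by (rule finite_inc)
  have Leven: "even L" using L by auto
  have L2: "2 \<le> L" using L by auto
  show ?thesis
  proof (cases "j = 0 \<or> j = L")
    case True
    then have vX: "v \<in> X" using par Leven by auto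
    have "card (Hinc v) = 2" using cH True by auto
    then obtain h1 h2 where hh: "Hinc v = {h1, h2}" "h1 \<noteq> h2" by (meson card_2_iff)
    have h1: "h1 \<in> H" "xe h1 = v" using hh Hinc_X[OF vX] by auto
    have h2: "h2 \<in> H" "xe h2 = v" using hh Hinc_X[OF vX] by auto
    have hp: "{hc h1, hc h2} = {3,4}" by (rule hc_pair[OF h1(1) h2(1) hh(2)]) (simp add: h1 h2)
    obtain i where i: "i < L" "inc_edges E xe ye v \<inter> PE = {es ! i}" "pc L ta tb td i \<in> {2,5}"
    proof (cases "j = 0")
      case True
      then show ?thesis using that[of 0] Pinc0[OF p(1)] p(3) L2 pc_end0[OF L] by auto
    next
      case False
      then have "j = L" using \<open>j = 0 \<or> j = L\<close> by simp
      then show ?thesis using that[of "L - 1"] PincL[OF p(1)] p(3) L2 pc_endL[OF L] L_def by auto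
    qed
    have img: "col ` inc_edges E xe ye v = {pc L ta tb td i, 3, 4}"
    proof -
      have "col ` inc_edges E xe ye v = col ` ({es ! i} \<union> {h1, h2})" using split i(2) hh by metis
      also have "\<dots> = col ` {es ! i} \<union> col ` {h1, h2}" by (rule image_Un)
      also have "col ` {es ! i} = {pc L ta tb td i}" using pcol[OF i(1)] by simp
      also have "col ` {h1, h2} = {hc h1, hc h2}" using col_H[OF h1(1)] col_H[OF h2(1)] by simp
      finally show ?thesis unfolding hp by (simp only: Un_insert_left Un_empty_left)
    qed
    obtain lo hi where lh: "{pc L ta tb td i, 3, 4} = {lo..hi}" "Suc hi - lo = 3" using int_end[OF i(3)] by blast
    have "card (inc_edges E xe ye v) = 3" using degX vX by blast
    moreover have "col ` inc_edges E xe ye v = {lo..hi}" using img lh(1) by simp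
      ultimately show ?thesis using fin_interval[OF fin, of col lo hi] lh(2) by simp
  next
    case False
    then have jl: "0 < j" "j < L" using p(2) L_def by auto
    have jl': "j < length es" using jl L_def by simp
    have pinc: "inc_edges E xe ye v \<inter> PE = {es ! (j - 1), es ! j}" using PincM(1)[OF p(1) jl(1) jl'] unfolding p(3) .
    have cj: "col (es ! (j - 1)) = pc L ta tb td (j - 1)" "col (es ! j) = pc L ta tb td j" using pcol jl by simp_all
    show ?thesis
    proof (cases "even j")
      case False
      then have vY: "v \<in> Y" using par by simp
      have "card (Hinc v) = 2" using cH False by auto
      then obtain h1 h2 where hh: "Hinc v = {h1, h2}" "h1 \<noteq> h2" by (meson card_2_iff)
      have h1: "h1 \<in> H" "ye h1 = v" using hh Hinc_Y[OF vY] by auto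
      have h2: "h2 \<in> H" "ye h2 = v" using hh Hinc_Y[OF vY] by auto
      have hp: "{hc h1, hc h2} = {3,4}" by (rule hc_pair[OF h1(1) h2(1) hh(2)]) (simp add: h1 h2)
      have img: "col ` inc_edges E xe ye v = {pc L ta tb td (j - 1), pc L ta tb td j, 3, 4}"
      proof -
        have "col ` inc_edges E xe ye v = col ` ({es ! (j - 1), es ! j} \<union> {h1, h2})" using split unfolding pinc hh by simp
        also have "\<dots> = col ` {es ! (j - 1), es ! j} \<union> col ` {h1, h2}" by (rule image_Un)
        also have "col ` {es ! (j - 1), es ! j} = {pc L ta tb td (j - 1), pc L ta tb td j}" using cj by simp
        also have "col ` {h1, h2} = {hc h1, hc h2}" using col_H[OF h1(1)] col_H[OF h2(1)] by simp
        finally show ?thesis unfolding hp by (simp only: Un_insert_left Un_empty_left)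
      qed
      have "(pc L ta tb td (j - 1), pc L ta tb td j) \<in> {(1,2),(2,1),(2,5),(5,2),(5,6),(6,5)}"
        by (rule pc_Y[OF L t ad False jl(2)])
      then have "\<exists>lo hi. {pc L ta tb td (j - 1), pc L ta tb td j, 3, 4} = {lo..hi} \<and> Suc hi - lo = 4"
        by (rule int_Y)
      then obtain lo hi where lh: "{pc L ta tb td (j - 1), pc L ta tb td j, 3, 4} = {lo..hi}" "Suc hi - lo = 4"
        by blast
      have "card (inc_edges E xe ye v) = 4" using degY vY by blast
      moreover have "col ` inc_edges E xe ye v = {lo..hi}" using img lh(1) by simp
      ultimately show ?thesis using fin_interval[OF fin, of col lo hi] lh(2) by simp
    next
      case True
      then have vX: "v \<in> X" using par by simp
      obtain h where h: "Hinc (vs ! j) = {h}" "h \<in> H" "xe h = vs ! j"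
        by (rule single_H[OF p(1)]) (use jl True L_def in simp_all)
      have hv: "Hinc v = {h}" using h p(3) by simp
      have jj: "j \<in> {2,4,6}" using jl True L by (auto elim!: evenE)
      have tj: "tt ta tb td j = hc h"
        using jj hcol_single[OF h(1)] unfolding tt_def ta_def tb_def td_def by auto
      have img: "col ` inc_edges E xe ye v = {pc L ta tb td (j - 1), pc L ta tb td j, tt ta tb td j}"
      proof -
        have "col ` inc_edges E xe ye v = col ` ({es ! (j - 1), es ! j} \<union> {h})" using split pinc hv by metis
        also have "\<dots> = col ` {es ! (j - 1), es ! j} \<union> col ` {h}" by (rule image_Un)
        also have "col ` {es ! (j - 1), es ! j} = {pc L ta tb td (j - 1), pc L ta tb td j}" using cj by simp
        also have "col ` {h} = {tt ta tb td j}" using col_H[OF h(2)] tj by simp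
        finally show ?thesis by (simp only: Un_insert_left Un_empty_left)
      qed
      have ttin: "tt ta tb td j \<in> {3,4}" using jj t unfolding tt_def by auto
      have "(pc L ta tb td (j - 1), pc L ta tb td j) \<in> (if tt ta tb td j = 3 then {(1,2),(2,1)} else {(5,6),(6,5)})"
        by (rule pc_X[OF L t ad True jl])
      then obtain lo hi where lh: "{pc L ta tb td (j - 1), pc L ta tb td j, tt ta tb td j} = {lo..hi}" "Suc hi - lo = 3"
        using int_X[OF ttin] by blast
      have "card (inc_edges E xe ye v) = 3" using degX vX by blast
      moreover have "col ` inc_edges E xe ye v = {lo..hi}" using img lh(1) by simp
      ultimately show ?thesis using fin_interval[OF fin, of col lo hi] lh(2) by simp
    qed
  qed
qed

lemma col_range: "e \<in> E \<Longrightarrow> col e \<in> {1..6}"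
proof (cases "e \<in> PE")
  case True
  then obtain vs es i where "(vs, es) \<in> P" "i < length es" "es ! i = e" unfolding PE_def by blast
  then have "col e = pcolor vs es i" using col_P by blast
  then show ?thesis using pcolor_range[of vs es i] by auto
next
  case False
  assume "e \<in> E"
  then have "e \<in> H" using False unfolding H_def by simp
  then show ?thesis using col_H unfolding hc_def by simp
qed

end


theorem mainTheorem2:
  fixes X Y :: "'v set" and E :: "'e set" and xe ye :: "'e \<Rightarrow> 'v"
  assumes "biregular34 X Y E xe ye"
    and "proper_path_factor X Y E xe ye"
  shows "\<exists>c. interval_coloring (X \<union> Y) E xe ye c \<and> (\<forall>e\<in>E. c e \<in> {1..6})"
proof -
  from assms(2) obtain P :: "('v list \<times> 'e list) set" where
    P1: "\<forall>(vs, es)\<in>P. is_path E xe ye vs es \<and> hd vs \<in> X \<and> last vs \<in> X \<and> length es \<in> {2, 4, 6, 8}"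
    and P2: "\<forall>p\<in>P. \<forall>q\<in>P. p \<noteq> q \<longrightarrow> set (fst p) \<inter> set (fst q) = {}"
    and P3: "(\<Union>p\<in>P. set (fst p)) = X \<union> Y"
    unfolding proper_path_factor_def by blast
  have B: "bigraph X Y E xe ye" "\<forall>x\<in>X. card (inc_edges E xe ye x) = 3" "\<forall>y\<in>Y. card (inc_edges E xe ye y) = 4"
    using assms(1) unfolding biregular34_def by blast+
  interpret pf X Y E xe ye P
    by (rule pf.intro[OF B P1 P2 P3])
  obtain c2 where c2: "proper2 H (\<lambda>h. phi (xe h)) ye c2"
    using two_col[OF finite_H free3_phi free3_ye] by blast
  interpret q: pf2 X Y E xe ye P c2
    by (rule pf2.intro[OF pf_axioms], unfold_locales, rule c2)
  have "interval_coloring (X \<union> Y) E xe ye q.col"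
    unfolding interval_coloring_def using q.col_range q.good_vertex by fastforce
  then show ?thesis using q.col_range by blast
qed

end
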